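(* Let $N\ge1$, let $(\Xi_{n,k})_{(n,k)\in\mathcal{I}}$ be independent $\mathcal{N}(0,I_d)$ random vectors and $X^N_{i,j}=\sum_{(n,k)\in\mathcal{I}_N}\psi_{n,k}(m_{i,j})\,\Xi_{n,k}$ for $(i,j)\in\mathcal{I}_N$. Let $\Sigma_N$ be the block covariance matrix of the vector $(X^N_{i,j})_{(i,j)\in\mathcal{I}_N}$ and $\Psi_N=\big[\psi_{n,k}(m_{i,j})\big]$ the block matrix with block rows indexed by $(i,j)$ and block columns by $(n,k)$, both listed in the order $(0,0),(1,0),(2,0),(2,1),(3,0),\dots$. Then $\Sigma_N=\Psi_N\Psi_N^T$, and this is the Cholesky decomposition of $\Sigma_N$.
   Context: Let $d,m\geq 1$. Let $\alpha:[0,1]\to\mathbb{R}^{d\times d}$, $\sqrt{\Gamma}:[0,1]\to\mathbb{R}^{d\times m}$ be continuous, $\Gamma=\sqrt{\Gamma}\sqrt{\Gamma}^{T}$. Let $F(s,t)$ be the flow ($\partial_tF(s,t)=\alpha(t)F(s,t)$, $F(s,s)=I_d$), $h_u(s,t)=\int_s^t F(w,u)\Gamma(w)F(w,u)^Tdw$, $h=h_0$, $g(t)=F(0,t)$. Non-degeneracy: $F(u,v)h_u(u,v)F(u,v)^T$ is positive definite for all $0\le u<v\le1$. $\mathcal{I}=\{(0,0)\}\cup\{(n,k):n\ge1,\ 0\le k<2^{n-1}\}$, $\mathcal{I}_N=\{(0,0)\}\cup\{(n,k)\in\mathcal{I}:1\le n\le N\}$. Partition: fix $\rho\in(0,1)$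 and reals $l_{n,k}<m_{n,k}<r_{n,k}$ ($n\ge1$) with $l_{1,0}=0$, $r_{1,0}=1$, $l_{n+1,2k}=l_{n,k}$, $r_{n+1,2k}=l_{n+1,2k+1}=m_{n,k}$, $r_{n+1,2k+1}=r_{n,k}$, $\max(r_{n,k}-m_{n,k},m_{n,k}-l_{n,k})<\rho(r_{n,k}-l_{n,k})$; and by convention $m_{0,0}=1$. Basis: for $n\ge1$ (writing $l,m,r$ for $l_{n,k},m_{n,k},r_{n,k}$), $\Sigma_{n,k}=h_m(l,m)h_m(l,r)^{-1}h_m(m,r)$, $\sigma_{n,k}$ its lower-triangular Cholesky factor with positive diagonal, $L_{n,k}=h(l,m)^{-1}g(m)^{-1}\sigma_{n,k}$, $R_{n,k}=h(m,r)^{-1}g(m)^{-1}\sigma_{n,k}$, $\psi_{n,k}(t)=g(t)h(l,t)L_{n,k}$ on $[l,m]$, $g(t)h(t,r)R_{n,k}$ on $[m,r]$, $0$ elsewhere; $\sigma_{0,0}$ is the lower-triangular Cholesky factor of $g(1)h(0,1)g(1)^T$, $L_{0,0}=h(0,1)^{-1}g(1)^{-1}\sigma_{0,0}$, $\psi_{0,0}(t)=g(t)h(0,t)L_{0,0}$. *)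

theory Defs
  imports "HOL-Analysis.Analysis" "HOL-Probability.Probability"
begin

type_synonym 'd sqm = "((real, 'd) vec, 'd) vec"
type_synonym 'd rvec = "(real, 'd) vec"

definition Iset :: "(nat \<times> nat) set" where
  "Iset = {(0,0)} \<union> {(n,k). 1 \<le> n \<and> k < 2^(n-1)}"

definition IsetN :: "nat \<Rightarrow> (nat \<times> nat) set" where
  "IsetN N = {(0,0)} \<union> {(n,k). (n,k) \<in> Iset \<and> 1 \<le> n \<and> n \<le> N}"

(* position in the listing (0,0),(1,0),(2,0),(2,1),(3,0),... *)
definition pos :: "nat \<times> nat \<Rightarrow> nat" where
  "pos p = (if fst p = 0 then 0 else 2^(fst p - 1) + snd p)"

(* the partition points, with the convention m_{0,0} = 1 *)
definition midpt :: "(nat \<Rightarrow> nat \<Rightarrow> real) \<Rightarrow> nat \<times> nat \<Rightarrow> real" where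
  "midpt m p = (if fst p = 0 then 1 else m (fst p) (snd p))"

definition hu :: "(real \<Rightarrow> real \<Rightarrow> ('d::{finite,linorder}) sqm) \<Rightarrow> (real \<Rightarrow> ('d::{finite,linorder}) sqm)
                  \<Rightarrow> real \<Rightarrow> real \<Rightarrow> real \<Rightarrow> ('d::{finite,linorder}) sqm" where
  "hu F Gam u s t = integral {s..t} (\<lambda>w. F w u ** Gam w ** transpose (F w u))"

definition hh :: "(real \<Rightarrow> real \<Rightarrow> ('d::{finite,linorder}) sqm) \<Rightarrow> (real \<Rightarrow> ('d::{finite,linorder}) sqm)
                  \<Rightarrow> real \<Rightarrow> real \<Rightarrow> ('d::{finite,linorder}) sqm" where
  "hh F Gam s t = hu F Gam 0 s t"

definition gg :: "(real \<Rightarrow> real \<Rightarrow> ('d::{finite,linorder}) sqm) \<Rightarrow> real \<Rightarrow> ('d::{finite,linorder}) sqm" where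
  "gg F t = F 0 t"

definition lower_tri :: "('d::{finite,linorder}) sqm \<Rightarrow> bool" where
  "lower_tri A \<longleftrightarrow> (\<forall>i j. i < j \<longrightarrow> A $ i $ j = 0)"

definition chol :: "('d::{finite,linorder}) sqm \<Rightarrow> ('d::{finite,linorder}) sqm" where
  "chol S = (THE L. lower_tri L \<and> (\<forall>i. L $ i $ i > 0) \<and> L ** transpose L = S)"

definition SigmaNK :: "(real \<Rightarrow> real \<Rightarrow> ('d::{finite,linorder}) sqm) \<Rightarrow> (real \<Rightarrow> ('d::{finite,linorder}) sqm)
     \<Rightarrow> (nat \<Rightarrow> nat \<Rightarrow> real) \<Rightarrow> (nat \<Rightarrow> nat \<Rightarrow> real) \<Rightarrow> (nat \<Rightarrow> nat \<Rightarrow> real)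
     \<Rightarrow> nat \<Rightarrow> nat \<Rightarrow> ('d::{finite,linorder}) sqm" where
  "SigmaNK F Gam l m r n k =
     hu F Gam (m n k) (l n k) (m n k) ** matrix_inv (hu F Gam (m n k) (l n k) (r n k))
       ** hu F Gam (m n k) (m n k) (r n k)"

definition sigmaNK :: "(real \<Rightarrow> real \<Rightarrow> ('d::{finite,linorder}) sqm) \<Rightarrow> (real \<Rightarrow> ('d::{finite,linorder}) sqm)
     \<Rightarrow> (nat \<Rightarrow> nat \<Rightarrow> real) \<Rightarrow> (nat \<Rightarrow> nat \<Rightarrow> real) \<Rightarrow> (nat \<Rightarrow> nat \<Rightarrow> real)
     \<Rightarrow> nat \<times> nat \<Rightarrow> ('d::{finite,linorder}) sqm" where
  "sigmaNK F Gam l m r p =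
     (if fst p = 0 then chol (gg F 1 ** hh F Gam 0 1 ** transpose (gg F 1))
      else chol (SigmaNK F Gam l m r (fst p) (snd p)))"

definition Lmat :: "(real \<Rightarrow> real \<Rightarrow> ('d::{finite,linorder}) sqm) \<Rightarrow> (real \<Rightarrow> ('d::{finite,linorder}) sqm)
     \<Rightarrow> (nat \<Rightarrow> nat \<Rightarrow> real) \<Rightarrow> (nat \<Rightarrow> nat \<Rightarrow> real) \<Rightarrow> (nat \<Rightarrow> nat \<Rightarrow> real)
     \<Rightarrow> nat \<times> nat \<Rightarrow> ('d::{finite,linorder}) sqm" where
  "Lmat F Gam l m r p =
     (if fst p = 0 then matrix_inv (hh F Gam 0 1) ** matrix_inv (gg F 1) ** sigmaNK F Gam l m r p
      else matrix_inv (hh F Gam (l (fst p) (snd p)) (m (fst p) (snd p)))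
             ** matrix_inv (gg F (m (fst p) (snd p))) ** sigmaNK F Gam l m r p)"

definition Rmat :: "(real \<Rightarrow> real \<Rightarrow> ('d::{finite,linorder}) sqm) \<Rightarrow> (real \<Rightarrow> ('d::{finite,linorder}) sqm)
     \<Rightarrow> (nat \<Rightarrow> nat \<Rightarrow> real) \<Rightarrow> (nat \<Rightarrow> nat \<Rightarrow> real) \<Rightarrow> (nat \<Rightarrow> nat \<Rightarrow> real)
     \<Rightarrow> nat \<times> nat \<Rightarrow> ('d::{finite,linorder}) sqm" where
  "Rmat F Gam l m r p =
     matrix_inv (hh F Gam (m (fst p) (snd p)) (r (fst p) (snd p)))
       ** matrix_inv (gg F (m (fst p) (snd p))) ** sigmaNK F Gam l m r p"

definition psi :: "(real \<Rightarrow> real \<Rightarrow> ('d::{finite,linorder}) sqm) \<Rightarrow> (real \<Rightarrow> ('d::{finite,linorder}) sqm)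
     \<Rightarrow> (nat \<Rightarrow> nat \<Rightarrow> real) \<Rightarrow> (nat \<Rightarrow> nat \<Rightarrow> real) \<Rightarrow> (nat \<Rightarrow> nat \<Rightarrow> real)
     \<Rightarrow> nat \<times> nat \<Rightarrow> real \<Rightarrow> ('d::{finite,linorder}) sqm" where
  "psi F Gam l m r p t =
     (if fst p = 0 then gg F t ** hh F Gam 0 t ** Lmat F Gam l m r p
      else (let n = fst p; k = snd p in
        if l n k \<le> t \<and> t \<le> m n k then gg F t ** hh F Gam (l n k) t ** Lmat F Gam l m r p
        else if m n k \<le> t \<and> t \<le> r n k then gg F t ** hh F Gam t (r n k) ** Rmat F Gam l m r p
        else 0))"

(* Scalar index set of the block vector (X^N_{i,j})_{(i,j) \<in> \<I>_N}: (block, component) *)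
definition blk_idx :: "nat \<Rightarrow> ((nat \<times> nat) \<times> 'd) set" where
  "blk_idx N = IsetN N \<times> UNIV"

definition idx_less :: "(nat \<times> nat) \<times> 'd::{finite,linorder} \<Rightarrow> (nat \<times> nat) \<times> 'd \<Rightarrow> bool" where
  "idx_less a b \<longleftrightarrow> pos (fst a) < pos (fst b) \<or> (fst a = fst b \<and> snd a < snd b)"

definition PsiN :: "(real \<Rightarrow> real \<Rightarrow> ('d::{finite,linorder}) sqm) \<Rightarrow> (real \<Rightarrow> ('d::{finite,linorder}) sqm)
     \<Rightarrow> (nat \<Rightarrow> nat \<Rightarrow> real) \<Rightarrow> (nat \<Rightarrow> nat \<Rightarrow> real) \<Rightarrow> (nat \<Rightarrow> nat \<Rightarrow> real)
     \<Rightarrow> (nat \<times> nat) \<times> 'd \<Rightarrow> (nat \<times> nat) \<times> 'd \<Rightarrow> real" where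
  "PsiN F Gam l m r a b = psi F Gam l m r (fst b) (midpt m (fst a)) $ snd a $ snd b"

definition XN :: "(real \<Rightarrow> real \<Rightarrow> ('d::{finite,linorder}) sqm) \<Rightarrow> (real \<Rightarrow> ('d::{finite,linorder}) sqm)
     \<Rightarrow> (nat \<Rightarrow> nat \<Rightarrow> real) \<Rightarrow> (nat \<Rightarrow> nat \<Rightarrow> real) \<Rightarrow> (nat \<Rightarrow> nat \<Rightarrow> real)
     \<Rightarrow> (nat \<times> nat \<Rightarrow> 'a \<Rightarrow> ('d::{finite,linorder}) rvec) \<Rightarrow> nat \<Rightarrow> nat \<times> nat \<Rightarrow> 'a \<Rightarrow> ('d::{finite,linorder}) rvec" where
  "XN F Gam l m r Xi N ij \<omega> =
     (\<Sum>nk\<in>IsetN N. psi F Gam l m r nk (midpt m ij) *v Xi nk \<omega>)"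

definition covariance :: "'a measure \<Rightarrow> ('a \<Rightarrow> real) \<Rightarrow> ('a \<Rightarrow> real) \<Rightarrow> real" where
  "covariance M X Y =
     integral\<^sup>L M (\<lambda>\<omega>. (X \<omega> - integral\<^sup>L M X) * (Y \<omega> - integral\<^sup>L M Y))"

definition SigmaN :: "'a measure \<Rightarrow> (real \<Rightarrow> real \<Rightarrow> ('d::{finite,linorder}) sqm) \<Rightarrow> (real \<Rightarrow> ('d::{finite,linorder}) sqm)
     \<Rightarrow> (nat \<Rightarrow> nat \<Rightarrow> real) \<Rightarrow> (nat \<Rightarrow> nat \<Rightarrow> real) \<Rightarrow> (nat \<Rightarrow> nat \<Rightarrow> real)
     \<Rightarrow> (nat \<times> nat \<Rightarrow> 'a \<Rightarrow> ('d::{finite,linorder}) rvec) \<Rightarrow> nat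
     \<Rightarrow> (nat \<times> nat) \<times> 'd \<Rightarrow> (nat \<times> nat) \<times> 'd \<Rightarrow> real" where
  "SigmaN M F Gam l m r Xi N a b =
     covariance M (\<lambda>\<omega>. XN F Gam l m r Xi N (fst a) \<omega> $ snd a)
                  (\<lambda>\<omega>. XN F Gam l m r Xi N (fst b) \<omega> $ snd b)"

definition is_cholesky :: "'i set \<Rightarrow> ('i \<Rightarrow> 'i \<Rightarrow> bool) \<Rightarrow> ('i \<Rightarrow> 'i \<Rightarrow> real)
     \<Rightarrow> ('i \<Rightarrow> 'i \<Rightarrow> real) \<Rightarrow> bool" where
  "is_cholesky I prec S L \<longleftrightarrow>
     (\<forall>a\<in>I. \<forall>b\<in>I. S a b = (\<Sum>e\<in>I. L a e * L b e)) \<and>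
     (\<forall>a\<in>I. \<forall>b\<in>I. prec a b \<longrightarrow> L a b = 0) \<and>
     (\<forall>a\<in>I. L a a > 0)"

end

theory Submission
  imports Defs
begin


lemma fl_induct:
  fixes i :: "'d::{finite,linorder}"
  assumes "\<And>i. (\<And>j. j < i \<Longrightarrow> P j) \<Longrightarrow> P i"
  shows "P i"
proof (induction i rule: measure_induct_rule[of "\<lambda>i::'d. card {j. j < i}"])
  case (less i)
  show ?case
  proof (rule assms)
    fix j assume "j < i"
    have "{k. k < j} \<subset> {k. k < i}" using \<open>j < i\<close> by auto
    then have "card {k. k < j} < card {k. k < i}" by (simp add: psubset_card_mono)
    then show "P j" using less by blast
  qed
qed

lemma down_ex:
  fixes T :: "'d::{finite,linorder} set \<Rightarrow> bool"
  assumes base: "T {}" and step: "\<And>i. T {j. j < i} \<Longrightarrow> T {j. j \<le> i}"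
  shows "T {j. j < i}"
proof (induction i rule: fl_induct)
  case (1 i)
  show ?case
  proof (cases "{j. j < i} = {}")
    case True then show ?thesis using base by simp
  next
    case False
    define j0 where "j0 = Max {j. j < i}"
    have fin: "finite {j. j < i}" by simp
    have j0: "j0 < i" using Max_in[OF fin False] j0_def by auto
    have eq: "{j. j < i} = {j. j \<le> j0}"
    proof
      show "{j. j < i} \<subseteq> {j. j \<le> j0}" using Max_ge[OF fin] j0_def by auto
      show "{j. j \<le> j0} \<subseteq> {j. j < i}" using j0 by auto
    qed
    show ?thesis unfolding eq using step 1 j0 by blast
  qed
qed

lemma down_all:
  fixes T :: "'d::{finite,linorder} set \<Rightarrow> bool"
  assumes base: "T {}" and step: "\<And>i. T {j. j < i} \<Longrightarrow> T {j. j \<le> i}"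
  shows "T UNIV"
proof -
  define i0 :: 'd where "i0 = Max UNIV"
  have "UNIV = {j. j \<le> i0}" using Max_ge[of UNIV] i0_def by auto
  then show ?thesis using step[OF down_ex[OF base step, of i0]] by simp
qed

lemma span_tri:
  fixes i k :: "'d::{finite,linorder}" and v :: "'d \<Rightarrow> (real,'d) vec"
  assumes tri: "\<And>j m. j < i \<Longrightarrow> j < m \<Longrightarrow> v j $ m = 0"
    and dg: "\<And>j. j < i \<Longrightarrow> v j $ j \<noteq> 0"
  shows "k < i \<Longrightarrow> axis k 1 \<in> span (v ` {j. j < i})"
proof (induction k rule: fl_induct)
  case (1 k)
  define w where "w = v k - (\<Sum>m\<in>{m. m < k}. (v k $ m) *\<^sub>R axis m (1::real))"
  have w: "w = (v k $ k) *\<^sub>R axis k 1"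
  proof (subst vec_eq_iff, intro allI)
    fix n
    have s: "(\<Sum>m\<in>{m. m < k}. (v k $ m) *\<^sub>R axis m (1::real)) $ n = (if n < k then v k $ n else 0)"
    proof -
      have "(\<Sum>m\<in>{m. m < k}. (v k $ m) *\<^sub>R axis m (1::real)) $ n
          = (\<Sum>m\<in>{m. m < k}. if n = m then v k $ m else 0)"
        unfolding sum_component by (intro sum.cong) (auto simp: axis_def)
      also have "\<dots> = (if n < k then v k $ n else 0)" by (simp add: sum.delta)
      finally show ?thesis .
    qed
    have "w $ n = v k $ n - (\<Sum>m\<in>{m. m < k}. (v k $ m) *\<^sub>R axis m (1::real)) $ n"
      unfolding w_def by (rule vector_minus_component)
    then have "w $ n = v k $ n - (if n < k then v k $ n else 0)" using s by simp
    then show "w $ n = ((v k $ k) *\<^sub>R axis k 1) $ n"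
      using tri[of k n] \<open>k < i\<close>
      by (auto simp: axis_def)
  qed
  have "w \<in> span (v ` {j. j < i})"
    unfolding w_def
  proof (rule span_diff)
    show "v k \<in> span (v ` {j. j < i})" using \<open>k < i\<close> by (intro span_base) auto
    show "(\<Sum>m\<in>{m. m < k}. (v k $ m) *\<^sub>R axis m (1::real)) \<in> span (v ` {j. j < i})"
      using 1 by (intro span_sum span_mul) auto
  qed
  then have "(1 / v k $ k) *\<^sub>R w \<in> span (v ` {j. j < i})" by (rule span_mul)
  then show ?case using w dg[OF \<open>k < i\<close>] by simp
qed

lemma vec_expand_lt:
  fixes p :: "(real,'d::{finite,linorder}) vec"
  assumes "\<And>m. \<not> m < i \<Longrightarrow> p $ m = 0"
  shows "p = (\<Sum>m\<in>{m. m < i}. (p $ m) *\<^sub>R axis m 1)"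
proof (subst vec_eq_iff, intro allI)
  fix n
  have "(\<Sum>m\<in>{m. m < i}. (p $ m) *\<^sub>R axis m (1::real)) $ n
          = (\<Sum>m\<in>{m. m < i}. if n = m then p $ m else 0)"
    unfolding sum_component by (intro sum.cong) (auto simp: axis_def)
  also have "\<dots> = (if n < i then p $ n else 0)" by (simp add: sum.delta)
  finally show "p $ n = (\<Sum>m\<in>{m. m < i}. (p $ m) *\<^sub>R axis m 1) $ n"
    using assms[of n] by simp
qed

definition chol_ok :: "('d::{finite,linorder}) sqm \<Rightarrow> 'd set \<Rightarrow> ('d \<Rightarrow> (real,'d) vec) \<Rightarrow> bool" where
  "chol_ok S A v \<longleftrightarrow> (\<forall>j\<in>A. (\<forall>m. j < m \<longrightarrow> v j $ m = 0) \<and> v j $ j > 0 \<and> (\<forall>k\<in>A. v j \<bullet> v k = S $ j $ k))"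

lemma chol_step:
  fixes S :: "('d::{finite,linorder}) sqm" and i :: 'd
  assumes sym: "\<And>a b. S $ a $ b = S $ b $ a"
    and pd: "\<And>x. x \<noteq> 0 \<Longrightarrow> x \<bullet> (S *v x) > 0"
    and IH: "chol_ok S {j. j < i} v"
  shows "\<exists>v'. chol_ok S {j. j \<le> i} v'"
proof -
  have tri: "\<And>j m. j < i \<Longrightarrow> j < m \<Longrightarrow> v j $ m = 0"
    and dg: "\<And>j. j < i \<Longrightarrow> v j $ j > 0"
    and gr: "\<And>j k. j < i \<Longrightarrow> k < i \<Longrightarrow> v j \<bullet> v k = S $ j $ k"
    using IH unfolding chol_ok_def by auto
  define T where "T = (\<lambda>A. A \<subseteq> {j. j < i} \<longrightarrow>
      (\<exists>p::(real,'d) vec. (\<forall>m. m \<notin> A \<longrightarrow> p $ m = 0) \<and> (\<forall>j\<in>A. p \<bullet> v j = S $ i $ j)))"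
  have "T {j. j < i}"
  proof (rule down_ex)
    show "T {}" unfolding T_def by (intro impI exI[of _ 0]) auto
  next
    fix k assume Tk: "T {j. j < k}"
    show "T {j. j \<le> k}" unfolding T_def
    proof
      assume sub: "{j. j \<le> k} \<subseteq> {j. j < i}"
      then have ki: "k < i" by auto
      have "{j. j < k} \<subseteq> {j. j < i}" using ki by auto
      then obtain p' where p'0: "\<And>m. m \<notin> {j. j < k} \<Longrightarrow> p' $ m = 0"
        and p'v: "\<And>j. j \<in> {j. j < k} \<Longrightarrow> p' \<bullet> v j = S $ i $ j"
        using Tk unfolding T_def by blast
      define c where "c = (S $ i $ k - p' \<bullet> v k) / (v k $ k)"
      define p where "p = p' + c *\<^sub>R axis k 1"
      show "\<exists>p::(real,'d) vec. (\<forall>m. m \<notin> {j. j \<le> k} \<longrightarrow> p $ m = 0) \<and>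
          (\<forall>j\<in>{j. j \<le> k}. p \<bullet> v j = S $ i $ j)"
      proof (intro exI[of _ p] conjI allI ballI impI)
        fix m assume "m \<notin> {j. j \<le> k}"
        then show "p $ m = 0" using p'0[of m] by (auto simp: p_def axis_def)
      next
        fix j assume "j \<in> {j. j \<le> k}"
        then have jk: "j \<le> k" by simp
        have pv: "p \<bullet> v j = p' \<bullet> v j + c * v j $ k"
          unfolding p_def by (simp add: inner_add_left inner_commute[of "axis k 1"] inner_axis)
        show "p \<bullet> v j = S $ i $ j"
        proof (cases "j = k")
          case True
          have "v k $ k > 0" using dg ki by simp
          then show ?thesis using pv True by (simp add: c_def)
        next
          case False
          then have "j < k" using jk by simp
          then show ?thesis using pv p'v[of j] tri[of j k] ki by simp
        qed
      qed
    qed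
  qed
  then obtain p where p0: "\<And>m. \<not> m < i \<Longrightarrow> p $ m = 0"
    and pv: "\<And>j. j < i \<Longrightarrow> p \<bullet> v j = S $ i $ j"
    unfolding T_def by auto
  have pexp: "p = (\<Sum>m\<in>{m. m < i}. (p $ m) *\<^sub>R axis m 1)"
    using p0 by (rule vec_expand_lt)
  have "p \<in> span (v ` {j. j < i})"
    by (subst pexp, intro span_sum span_mul span_tri[of i v])
      (use tri dg in \<open>auto simp: less_imp_neq[symmetric]\<close>)
  then obtain u where u: "p = (\<Sum>w\<in>v ` {j. j < i}. u w *\<^sub>R w)"
    using span_finite[of "v ` {j. j < i}"] by auto
  have inj: "inj_on v {j. j < i}"
  proof (rule inj_onI)
    fix a b assume a: "a \<in> {j. j < i}" and b: "b \<in> {j. j < i}" and e: "v a = v b"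
    show "a = b"
    proof (rule ccontr)
      assume "a \<noteq> b"
      then consider "a < b" | "b < a" by fastforce
      then show False
      proof cases
        case 1 then show ?thesis using tri[of a b] dg[of b] a b e by auto
      next
        case 2 then show ?thesis using tri[of b a] dg[of a] a b e by auto
      qed
    qed
  qed
  define a where "a = (\<lambda>j. u (v j))"
  have pa: "p = (\<Sum>j\<in>{j. j < i}. a j *\<^sub>R v j)"
    unfolding u a_def by (simp add: sum.reindex[OF inj])
  define x :: "(real,'d) vec" where "x = (\<chi> m. if m < i then a m else if m = i then -1 else 0)"
  have xm: "x $ m = (if m < i then a m else if m = i then -1 else 0)" for m
    by (simp add: x_def)
  have Sx: "(S *v x) $ m = (\<Sum>n\<in>{n. n < i}. S $ m $ n * a n) - S $ m $ i" for m
  proof -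
    have "(S *v x) $ m = (\<Sum>n\<in>UNIV. S $ m $ n * x $ n)"
      by (simp add: matrix_vector_mult_def)
    also have "\<dots> = (\<Sum>n\<in>UNIV. (if n < i then S $ m $ n * a n else 0) + (if n = i then - S $ m $ i else 0))"
      by (intro sum.cong) (auto simp: x_def)
    also have "\<dots> = (\<Sum>n\<in>{n. n < i}. S $ m $ n * a n) - S $ m $ i"
      by (simp add: sum.distrib sum.If_cases)
    finally show ?thesis .
  qed
  have Sx0: "(S *v x) $ m = 0" if "m < i" for m
  proof -
    have "(\<Sum>n\<in>{n. n < i}. S $ m $ n * a n) = (\<Sum>n\<in>{n. n < i}. v m \<bullet> (a n *\<^sub>R v n))"
      by (intro sum.cong) (auto simp: gr that)
    also have "\<dots> = v m \<bullet> p" unfolding pa by (simp add: inner_sum_right)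
    also have "\<dots> = S $ m $ i" using pv[OF that] sym by (simp add: inner_commute)
    finally show ?thesis using Sx by simp
  qed
  have Sxi: "(S *v x) $ i = p \<bullet> p - S $ i $ i"
  proof -
    have "(\<Sum>n\<in>{n. n < i}. S $ i $ n * a n) = (\<Sum>n\<in>{n. n < i}. p \<bullet> (a n *\<^sub>R v n))"
      by (intro sum.cong) (auto simp: pv)
    also have "\<dots> = p \<bullet> p" by (subst (2) pa) (simp add: inner_sum_right)
    finally show ?thesis using Sx by simp
  qed
  have "x \<bullet> (S *v x) = (\<Sum>m\<in>UNIV. x $ m * (S *v x) $ m)" by (simp add: inner_vec_def)
  also have "\<dots> = (\<Sum>m\<in>UNIV. if m = i then S $ i $ i - p \<bullet> p else 0)"
    by (intro sum.cong) (auto simp: xm Sx0 Sxi)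
  also have "\<dots> = S $ i $ i - p \<bullet> p" by simp
  finally have xSx: "x \<bullet> (S *v x) = S $ i $ i - p \<bullet> p" .
  have "x \<noteq> 0"
  proof
    assume "x = 0" then have "x $ i = 0" by simp
    then show False by (simp add: xm)
  qed
  then have pos: "S $ i $ i - p \<bullet> p > 0" using pd[of x] xSx by simp
  define t where "t = sqrt (S $ i $ i - p \<bullet> p)"
  have t: "t > 0" "t * t = S $ i $ i - p \<bullet> p" using pos by (auto simp: t_def)
  have pi: "p $ i = 0" using p0 by simp
  define v' where "v' = v(i := p + t *\<^sub>R axis i 1)"
  show ?thesis
    unfolding chol_ok_def
  proof (intro exI[of _ v'] ballI conjI allI impI)
    fix j assume j: "j \<in> {j. j \<le> i}"
    show "0 < v' j $ j"
      using j dg[of j] t pi by (cases "j = i") (auto simp: v'_def)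
    fix m assume "j < m"
    then show "v' j $ m = 0"
      using j tri[of j m] p0[of m] by (cases "j = i") (auto simp: v'_def axis_def)
  next
    fix j k assume j: "j \<in> {j. j \<le> i}" and k: "k \<in> {j. j \<le> i}"
    have pvi: "p \<bullet> (p + t *\<^sub>R axis i 1) = p \<bullet> p"
      by (simp add: inner_add_right inner_axis pi)
    have ii: "(p + t *\<^sub>R axis i 1) \<bullet> (p + t *\<^sub>R axis i 1) = p \<bullet> p + t * t"
      by (simp add: inner_add_left inner_add_right inner_commute[of "axis i 1"] inner_axis pi)
    have vk: "v q \<bullet> (p + t *\<^sub>R axis i 1) = S $ q $ i" if "q < i" for q
      using pv[OF that] tri[of q i] that sym
      by (simp add: inner_add_right inner_axis inner_commute)
    show "v' j \<bullet> v' k = S $ j $ k"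
      using j k gr[of j k] ii t vk[of j] vk[of k] sym[of j i] sym[of k i]
      by (cases "j = i"; cases "k = i") (auto simp: v'_def inner_commute)
  qed
qed

lemma chol_exists:
  fixes S :: "('d::{finite,linorder}) sqm"
  assumes sym: "\<And>a b. S $ a $ b = S $ b $ a"
    and pd: "\<And>x. x \<noteq> 0 \<Longrightarrow> x \<bullet> (S *v x) > 0"
  shows "\<exists>L. lower_tri L \<and> (\<forall>i. L $ i $ i > 0) \<and> L ** transpose L = S"
proof -
  have "\<exists>v. chol_ok S UNIV v"
  proof (rule down_all[of "\<lambda>A. \<exists>v. chol_ok S A v"])
    show "\<exists>v. chol_ok S {} v" by (simp add: chol_ok_def)
    fix i assume "\<exists>v. chol_ok S {j. j < i} v"
    then obtain v where "chol_ok S {j. j < i} v" by blast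
    then show "\<exists>v. chol_ok S {j. j \<le> i} v" using chol_step[OF sym pd] by blast
  qed
  then obtain v where v: "chol_ok S UNIV v" by blast
  define L :: "('d) sqm" where "L = (\<chi> j. v j)"
  show ?thesis
  proof (intro exI[of _ L] conjI allI)
    show "lower_tri L" using v by (simp add: lower_tri_def L_def chol_ok_def)
    show "L $ i $ i > 0" for i using v by (simp add: L_def chol_ok_def)
    show "L ** transpose L = S"
      using v by (simp add: vec_eq_iff L_def chol_ok_def matrix_matrix_mult_def transpose_def inner_vec_def)
  qed
qed

lemma chol_unique:
  fixes L M :: "('d::{finite,linorder}) sqm"
  assumes L: "lower_tri L" "\<And>i. L $ i $ i > 0" and M: "lower_tri M" "\<And>i. M $ i $ i > 0"
    and eq: "L ** transpose L = M ** transpose M"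
  shows "L = M"
proof -
  have dot: "L $ i \<bullet> L $ j = M $ i \<bullet> M $ j" for i j
    using arg_cong[OF eq, of "\<lambda>A. A $ i $ j"]
    by (simp add: matrix_matrix_mult_def transpose_def inner_vec_def)
  have "L $ i = M $ i" for i
  proof (induction i rule: fl_induct)
    case (1 i)
    define d where "d = L $ i - M $ i"
    have dk: "d $ k = 0" if "k < i" for k
    proof -
      have "axis k 1 \<in> span ((\<lambda>j. L $ j) ` {j. j < i})"
        by (rule span_tri[OF _ _ that]) (use L in \<open>auto simp: lower_tri_def less_imp_neq[symmetric]\<close>)
      moreover have "orthogonal d y" if y: "y \<in> (\<lambda>j. L $ j) ` {j. j < i}" for y
      proof -
        obtain j where j: "j < i" "y = L $ j" using y by blast
        have "d \<bullet> L $ j = L $ i \<bullet> L $ j - M $ i \<bullet> M $ j"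
          using 1 j by (simp add: d_def inner_diff_left)
        then show ?thesis using dot j by (simp add: orthogonal_def)
      qed
      ultimately have "orthogonal d (axis k 1)" by (rule orthogonal_to_span)
      then show ?thesis by (simp add: orthogonal_def inner_axis)
    qed
    have dk2: "d $ k = 0" if "i < k" for k
      using L(1) M(1) that by (simp add: d_def lower_tri_def)
    define c where "c = L $ i $ i - M $ i $ i"
    have dc: "d = c *\<^sub>R axis i 1"
      unfolding vec_eq_iff
    proof
      fix k show "d $ k = (c *\<^sub>R axis i 1) $ k"
        using dk[of k] dk2[of k] by (cases k i rule: linorder_cases) (auto simp: c_def d_def axis_def)
    qed
    have Li: "L $ i = M $ i + c *\<^sub>R axis i 1" using dc by (simp add: d_def algebra_simps)
    have "L $ i \<bullet> L $ i = M $ i \<bullet> M $ i + c * (2 * M $ i $ i + c)"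
      unfolding Li by (simp add: inner_add_left inner_add_right inner_commute[of "axis i 1"] inner_axis algebra_simps)
    then have "c * (2 * M $ i $ i + c) = 0" using dot[of i i] by simp
    moreover have "2 * M $ i $ i + c > 0" using L(2)[of i] M(2)[of i] by (simp add: c_def)
    ultimately have "c = 0" by simp
    then show ?case using Li by simp
  qed
  then show ?thesis by (simp add: vec_eq_iff)
qed

lemma chol_props:
  fixes S :: "('d::{finite,linorder}) sqm"
  assumes sym: "\<And>a b. S $ a $ b = S $ b $ a"
    and pd: "\<And>x. x \<noteq> 0 \<Longrightarrow> x \<bullet> (S *v x) > 0"
  shows "lower_tri (chol S) \<and> (\<forall>i. chol S $ i $ i > 0) \<and> chol S ** transpose (chol S) = S"
proof -
  have "\<exists>!L. lower_tri L \<and> (\<forall>i. L $ i $ i > 0) \<and> L ** transpose L = S"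
    using chol_exists[OF sym pd] chol_unique by metis
  then show ?thesis unfolding chol_def by (rule theI')
qed



lemma mm_add_r: "((A::real^'n^'m) + B) ** (C::real^'p^'n) = A ** C + B ** C"
  by (simp add: matrix_matrix_mult_def vec_eq_iff sum.distrib distrib_right)

lemma mm_sub_l: "(A::real^'n^'m) ** ((B::real^'p^'n) - C) = A ** B - A ** C"
  by (simp add: matrix_matrix_mult_def vec_eq_iff sum_subtractf right_diff_distrib)

lemma mm_sub_r: "((A::real^'n^'m) - B) ** (C::real^'p^'n) = A ** C - B ** C"
  by (simp add: matrix_matrix_mult_def vec_eq_iff sum_subtractf left_diff_distrib)

lemma bilinear_mm: "bilinear ((**) :: real^'n^'m \<Rightarrow> real^'p^'n \<Rightarrow> real^'p^'m)"
  unfolding bilinear_def linear_iff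
  by (auto simp: matrix_add_ldistrib mm_add_r matrix_scalar_ac scalar_matrix_assoc[symmetric])

lemma bb_mm: "bounded_bilinear ((**) :: real^'n^'m \<Rightarrow> real^'p^'n \<Rightarrow> real^'p^'m)"
  using bilinear_mm bilinear_conv_bounded_bilinear by blast

lemma mm_bound: "\<exists>B>0. \<forall>x y. norm ((x::real^'n^'m) ** (y::real^'p^'n)) \<le> B * norm x * norm y"
  using bilinear_bounded_pos[OF bilinear_mm] by blast

lemma bl_transpose: "bounded_linear (transpose :: real^'n^'m \<Rightarrow> real^'m^'n)"
  unfolding linear_conv_bounded_linear[symmetric] linear_iff
  by (auto simp: transpose_def vec_eq_iff)

lemma minv_r: "invertible (A::real^'n^'n) \<Longrightarrow> A ** matrix_inv A = mat 1"
  unfolding invertible_def matrix_inv_def by (rule someI2_ex) auto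

lemma minv_l: "invertible (A::real^'n^'n) \<Longrightarrow> matrix_inv A ** A = mat 1"
  unfolding invertible_def matrix_inv_def by (rule someI2_ex) auto

lemma minv_unique:
  fixes A B :: "real^'n^'n"
  assumes "A ** B = mat 1"
  shows "matrix_inv A = B"
proof -
  have BA: "B ** A = mat 1" using assms matrix_left_right_inverse by blast
  then have inv: "invertible A" unfolding invertible_def using assms by blast
  have "matrix_inv A = matrix_inv A ** (A ** B)" using assms by simp
  also have "\<dots> = B" using minv_l[OF inv] by (simp add: matrix_mul_assoc)
  finally show ?thesis .
qed

lemma ode_est:
  fixes Z :: "real \<Rightarrow> real^'n^'n" and alpha :: "real \<Rightarrow> real^'n^'n"
  assumes C: "\<And>t (X::real^'n^'n). t \<in> {0..1} \<Longrightarrow> \<bar>X \<bullet> (alpha t ** X)\<bar> \<le> C * (X \<bullet> X)"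
    and d: "\<And>t. t \<in> {0..1} \<Longrightarrow> (Z has_vector_derivative alpha t ** Z t) (at t within {0..1})"
    and u: "u \<in> {0..1}" and t: "t \<in> {0..1}"
  shows "Z t \<bullet> Z t \<le> exp (2 * C * \<bar>t - u\<bar>) * (Z u \<bullet> Z u)"
proof -
  define q where "q = (\<lambda>x. Z x \<bullet> Z x)"
  define q' where "q' = (\<lambda>x. 2 * (Z x \<bullet> (alpha x ** Z x)))"
  have dq: "(q has_real_derivative q' x) (at x within {0..1})" if "x \<in> {0..1}" for x
  proof -
    have "((\<lambda>x. Z x \<bullet> Z x) has_vector_derivative
        (Z x \<bullet> (alpha x ** Z x) + (alpha x ** Z x) \<bullet> Z x)) (at x within {0..1})"
      by (rule bounded_bilinear.has_vector_derivative[OF bounded_bilinear_inner d[OF that] d[OF that]])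
    then show ?thesis
      unfolding has_real_derivative_iff_has_vector_derivative q_def q'_def
      by (simp add: inner_commute)
  qed
  have dq_at: "(q has_real_derivative q' x) (at x)" if "0 < x" "x < 1" for x
    using dq[of x] that at_within_interior[of x "{0..1::real}"] by auto
  have qcont: "continuous_on {0..1} q"
    using dq by (intro continuous_on_vector_derivative)
      (auto simp: has_real_derivative_iff_has_vector_derivative)
  have q'b: "\<bar>q' x\<bar> \<le> 2 * C * q x" if "x \<in> {0..1}" for x
    using C[OF that, of "Z x"] by (simp add: q_def q'_def abs_mult)
  show ?thesis
  proof (cases "u \<le> t")
    case True
    define f where "f = (\<lambda>x. exp (- 2 * C * x) * q x)"
    have "f t \<le> f u"
    proof (rule DERIV_nonpos_imp_decreasing_open[OF True])
      fix x assume x: "u < x" "x < t"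
      then have x01: "0 < x" "x < 1" "x \<in> {0..1}" using u t by auto
      have e: "((\<lambda>x. exp (- 2 * C * x)) has_real_derivative (- 2 * C * exp (- 2 * C * x))) (at x)"
        by (auto intro!: derivative_eq_intros)
      have "(f has_real_derivative (exp (- 2 * C * x) * q' x + (- 2 * C * exp (- 2 * C * x)) * q x)) (at x)"
        using DERIV_mult[OF e dq_at[OF x01(1,2)]] unfolding f_def by (simp add: algebra_simps)
      moreover have "exp (- 2 * C * x) * q' x + (- 2 * C * exp (- 2 * C * x)) * q x \<le> 0"
      proof -
        have "q' x \<le> 2 * C * q x" using q'b[OF x01(3)] by linarith
        then have "exp (- 2 * C * x) * q' x \<le> exp (- 2 * C * x) * (2 * C * q x)"
          by (intro mult_left_mono) auto
        then show ?thesis by (simp add: algebra_simps)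
      qed
      ultimately show "\<exists>y. (f has_real_derivative y) (at x) \<and> y \<le> 0" by blast
    next
      show "continuous_on {u..t} f" unfolding f_def
        using qcont u t by (intro continuous_intros continuous_on_subset[OF qcont]) auto
    qed
    then have "exp (- 2 * C * t) * q t \<le> exp (- 2 * C * u) * q u" by (simp add: f_def)
    then have "exp (2 * C * t) * (exp (- 2 * C * t) * q t) \<le> exp (2 * C * t) * (exp (- 2 * C * u) * q u)"
      by (intro mult_left_mono) auto
    then have "q t \<le> exp (2 * C * t + - 2 * C * u) * q u"
      by (simp add: exp_add[symmetric] mult.assoc[symmetric])
    then show ?thesis using True by (simp add: q_def algebra_simps)
  next
    case False
    then have tu: "t \<le> u" by simp
    define f where "f = (\<lambda>x. exp (2 * C * x) * q x)"
    have "f t \<le> f u"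
    proof (rule DERIV_nonneg_imp_increasing_open[OF tu])
      fix x assume x: "t < x" "x < u"
      then have x01: "0 < x" "x < 1" "x \<in> {0..1}" using u t by auto
      have e: "((\<lambda>x. exp (2 * C * x)) has_real_derivative (2 * C * exp (2 * C * x))) (at x)"
        by (auto intro!: derivative_eq_intros)
      have "(f has_real_derivative (exp (2 * C * x) * q' x + (2 * C * exp (2 * C * x)) * q x)) (at x)"
        using DERIV_mult[OF e dq_at[OF x01(1,2)]] unfolding f_def by (simp add: algebra_simps)
      moreover have "exp (2 * C * x) * q' x + (2 * C * exp (2 * C * x)) * q x \<ge> 0"
      proof -
        have "- q' x \<le> 2 * C * q x" using q'b[OF x01(3)] by linarith
        then have "exp (2 * C * x) * (- q' x) \<le> exp (2 * C * x) * (2 * C * q x)"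
          by (intro mult_left_mono) auto
        then show ?thesis by (simp add: algebra_simps)
      qed
      ultimately show "\<exists>y. (f has_real_derivative y) (at x) \<and> y \<ge> 0" by blast
    next
      show "continuous_on {t..u} f" unfolding f_def
        using qcont u t by (intro continuous_intros continuous_on_subset[OF qcont]) auto
    qed
    then have "exp (2 * C * t) * q t \<le> exp (2 * C * u) * q u" by (simp add: f_def)
    then have "exp (- 2 * C * t) * (exp (2 * C * t) * q t) \<le> exp (- 2 * C * t) * (exp (2 * C * u) * q u)"
      by (intro mult_left_mono) auto
    then have "q t \<le> exp (- 2 * C * t + 2 * C * u) * q u"
      by (simp add: exp_add[symmetric] mult.assoc[symmetric])
    then show ?thesis using tu by (simp add: q_def algebra_simps)
  qed
qed

locale flowctx =
  fixes alpha :: "real \<Rightarrow> real^'n^'n" and F :: "real \<Rightarrow> real \<Rightarrow> real^'n^'n"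
  assumes alpha_cont: "continuous_on {0..1} alpha"
    and flow_deriv: "\<And>s t. s \<in> {0..1} \<Longrightarrow> t \<in> {0..1} \<Longrightarrow>
        ((\<lambda>t. F s t) has_vector_derivative (alpha t ** F s t)) (at t within {0..1})"
    and flow_init: "\<And>s. s \<in> {0..1} \<Longrightarrow> F s s = mat 1"
begin

lemma Cbound: "\<exists>C. \<forall>t\<in>{0..1}. \<forall>X::real^'n^'n. \<bar>X \<bullet> (alpha t ** X)\<bar> \<le> C * (X \<bullet> X)"
proof -
  obtain B where B: "B > 0" "\<And>x y. norm ((x::real^'n^'n) ** (y::real^'n^'n)) \<le> B * norm x * norm y"
    using mm_bound by blast
  have "compact (alpha ` {0..1})" by (rule compact_continuous_image[OF alpha_cont]) simp
  then obtain K where K: "\<And>t. t \<in> {0..1} \<Longrightarrow> norm (alpha t) \<le> K"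
    using compact_imp_bounded bounded_iff by (metis imageI)
  show ?thesis
  proof (intro exI[of _ "B * K"] ballI allI)
    fix t :: real and X :: "real^'n^'n" assume t: "t \<in> {0..1}"
    have "\<bar>X \<bullet> (alpha t ** X)\<bar> \<le> norm X * norm (alpha t ** X)" by (rule Cauchy_Schwarz_ineq2)
    also have "\<dots> \<le> norm X * (B * norm (alpha t) * norm X)"
      by (intro mult_left_mono B(2)) auto
    also have "\<dots> \<le> norm X * (B * K * norm X)"
      using K[OF t] B(1) by (intro mult_left_mono mult_right_mono) auto
    also have "\<dots> = B * K * (X \<bullet> X)" by (simp add: power2_norm_eq_inner[symmetric] power2_eq_square)
    finally show "\<bar>X \<bullet> (alpha t ** X)\<bar> \<le> B * K * (X \<bullet> X)" .
  qed
qed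

lemma uniq:
  fixes Z :: "real \<Rightarrow> real^'n^'n"
  assumes d: "\<And>t. t \<in> {0..1} \<Longrightarrow> (Z has_vector_derivative alpha t ** Z t) (at t within {0..1})"
    and u: "u \<in> {0..1}" and Zu: "Z u = 0" and t: "t \<in> {0..1}"
  shows "Z t = 0"
proof -
  obtain C where C: "\<And>t (X::real^'n^'n). t \<in> {0..1} \<Longrightarrow> \<bar>X \<bullet> (alpha t ** X)\<bar> \<le> C * (X \<bullet> X)"
    using Cbound by blast
  have "Z t \<bullet> Z t \<le> 0" using ode_est[OF C d u t] Zu by simp
  then show ?thesis by (metis inner_eq_zero_iff inner_ge_zero order_antisym)
qed

lemma flow:
  assumes s: "s \<in> {0..1}" and u: "u \<in> {0..1}" and t: "t \<in> {0..1}"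
  shows "F s t = F u t ** F s u"
proof -
  define Z where "Z = (\<lambda>t. F s t - F u t ** F s u)"
  have "Z t = 0"
  proof (rule uniq[OF _ u _ t])
    fix x :: real assume x: "x \<in> {0..1}"
    have "((\<lambda>t. F u t ** F s u) has_vector_derivative ((alpha x ** F u x) ** F s u)) (at x within {0..1})"
      by (rule bounded_linear.has_vector_derivative[OF bounded_bilinear.bounded_linear_left[OF bb_mm] flow_deriv[OF u x]])
    then show "(Z has_vector_derivative alpha x ** Z x) (at x within {0..1})"
      unfolding Z_def using flow_deriv[OF s x]
      by (auto intro!: derivative_eq_intros simp: matrix_mul_assoc mm_sub_l)
  next
    show "Z u = 0" using flow_init[OF u] by (simp add: Z_def)
  qed
  then show ?thesis by (simp add: Z_def)
qed

lemma Finv: "s \<in> {0..1} \<Longrightarrow> t \<in> {0..1} \<Longrightarrow> F s t ** F t s = mat 1"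
  using flow[of t s t] flow_init[of t] by simp

lemma Finvertible: "s \<in> {0..1} \<Longrightarrow> t \<in> {0..1} \<Longrightarrow> invertible (F s t)"
  unfolding invertible_def using Finv[of s t] Finv[of t s] by (intro exI[of _ "F t s"]) simp

lemma Fminv: "s \<in> {0..1} \<Longrightarrow> t \<in> {0..1} \<Longrightarrow> matrix_inv (F s t) = F t s"
  by (rule minv_unique[OF Finv])

lemma contF2: "s \<in> {0..1} \<Longrightarrow> continuous_on {0..1} (F s)"
  by (rule continuous_on_vector_derivative[OF flow_deriv])

lemma Fbound: "\<exists>K. \<forall>s\<in>{0..1}. \<forall>t\<in>{0..1}. norm (F s t) \<le> K"
proof -
  obtain C where C: "\<And>t (X::real^'n^'n). t \<in> {0..1} \<Longrightarrow> \<bar>X \<bullet> (alpha t ** X)\<bar> \<le> C * (X \<bullet> X)"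
    using Cbound by blast
  have "norm (F s t) \<le> sqrt (exp (2 * \<bar>C\<bar>) * (mat 1 \<bullet> (mat 1 :: real^'n^'n)))"
    if s: "s \<in> {0..1}" and t: "t \<in> {0..1}" for s t
  proof -
    have "F s t \<bullet> F s t \<le> exp (2 * C * \<bar>t - s\<bar>) * (F s s \<bullet> F s s)"
      by (rule ode_est[OF C flow_deriv[OF s] s t])
    also have "\<dots> = exp (2 * C * \<bar>t - s\<bar>) * (mat 1 \<bullet> (mat 1 :: real^'n^'n))"
      using flow_init[OF s] by simp
    also have "\<dots> \<le> exp (2 * \<bar>C\<bar>) * (mat 1 \<bullet> (mat 1 :: real^'n^'n))"
    proof (rule mult_right_mono)
      have "2 * C * \<bar>t - s\<bar> \<le> 2 * \<bar>C\<bar>"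
      proof -
        have "\<bar>t - s\<bar> \<le> 1" using s t by auto
        have "C * \<bar>t - s\<bar> \<le> \<bar>C\<bar> * \<bar>t - s\<bar>" by (intro mult_right_mono) auto
        also have "\<dots> \<le> \<bar>C\<bar> * 1" using \<open>\<bar>t - s\<bar> \<le> 1\<close> by (intro mult_left_mono) auto
        finally have "C * \<bar>t - s\<bar> \<le> \<bar>C\<bar> * 1" .
        then show ?thesis by simp
      qed
      then show "exp (2 * C * \<bar>t - s\<bar>) \<le> exp (2 * \<bar>C\<bar>)" by simp
    qed simp
    finally have "F s t \<bullet> F s t \<le> exp (2 * \<bar>C\<bar>) * (mat 1 \<bullet> (mat 1 :: real^'n^'n))" .
    then show ?thesis by (simp add: norm_eq_sqrt_inner)
  qed
  then show ?thesis by blast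
qed

lemma contF1:
  assumes u: "u \<in> {0..1}"
  shows "continuous_on {0..1} (\<lambda>w. F w u)"
proof -
  obtain K where K: "\<And>s t. s \<in> {0..1} \<Longrightarrow> t \<in> {0..1} \<Longrightarrow> norm (F s t) \<le> K"
    using Fbound by blast
  obtain B where B: "B > 0" "\<And>x y. norm ((x::real^'n^'n) ** (y::real^'n^'n)) \<le> B * norm x * norm y"
    using mm_bound by blast
  have "norm (F 0 0) \<le> K" using K[of 0 0] by simp
  then have K0: "K \<ge> 0" using norm_ge_zero[of "F 0 0"] by linarith
  have c0: "continuous_on {0..1} (\<lambda>w. F w 0)"
    unfolding continuous_on_def
  proof
    fix w0 :: real assume w0: "w0 \<in> {0..1}"
    have lim: "((\<lambda>w. B * B * K * K * norm (F 0 w0 - F 0 w)) \<longlongrightarrow> 0) (at w0 within {0..1})"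
    proof -
      have "(F 0 \<longlongrightarrow> F 0 w0) (at w0 within {0..1})"
        using contF2[of 0] w0 unfolding continuous_on_def by simp
      then have "((\<lambda>w. F 0 w0 - F 0 w) \<longlongrightarrow> F 0 w0 - F 0 w0) (at w0 within {0..1})"
        by (rule tendsto_diff[OF tendsto_const])
      then have "((\<lambda>w. F 0 w0 - F 0 w) \<longlongrightarrow> 0) (at w0 within {0..1})" by simp
      then have "((\<lambda>w. norm (F 0 w0 - F 0 w)) \<longlongrightarrow> 0) (at w0 within {0..1})"
        by (rule tendsto_norm_zero)
      from tendsto_mult[OF tendsto_const this, of "B * B * K * K"]
      show ?thesis by simp
    qed
    have ev: "\<forall>\<^sub>F w in at w0 within {0..1}. norm (F w 0 - F w0 0) \<le> B * B * K * K * norm (F 0 w0 - F 0 w)"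
      unfolding eventually_at_filter
    proof (rule always_eventually, intro allI impI)
      fix w :: real assume w: "w \<in> {0..1}"
      have eq: "F w 0 - F w0 0 = F w 0 ** (F 0 w0 - F 0 w) ** F w0 0"
      proof -
        have e1: "F w 0 ** (F 0 w0 - F 0 w) ** F w0 0 = F w 0 ** F 0 w0 ** F w0 0 - F w 0 ** F 0 w ** F w0 0"
          by (simp only: mm_sub_l mm_sub_r)
        have e2: "F w 0 ** F 0 w0 ** F w0 0 = F w 0"
          using Finv[of 0 w0] w0 by (simp add: matrix_mul_assoc[symmetric])
        have e3: "F w 0 ** F 0 w ** F w0 0 = F w0 0" using Finv[of w 0] w by simp
        show ?thesis using e1 e2 e3 by simp
      qed
      have "norm (F w 0 - F w0 0) = norm (F w 0 ** (F 0 w0 - F 0 w) ** F w0 0)" by (simp only: eq)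
      also have "\<dots> \<le> B * norm (F w 0 ** (F 0 w0 - F 0 w)) * norm (F w0 0)"
        by (rule B(2))
      also have "\<dots> \<le> B * (B * norm (F w 0) * norm (F 0 w0 - F 0 w)) * norm (F w0 0)"
      proof -
        have "norm (F w 0 ** (F 0 w0 - F 0 w)) \<le> B * norm (F w 0) * norm (F 0 w0 - F 0 w)" by (rule B(2))
        then have "B * norm (F w 0 ** (F 0 w0 - F 0 w)) \<le> B * (B * norm (F w 0) * norm (F 0 w0 - F 0 w))"
          by (rule mult_left_mono) (use B(1) in simp)
        then show ?thesis by (rule mult_right_mono) simp
      qed
      also have "\<dots> = (B * B * norm (F 0 w0 - F 0 w)) * (norm (F w 0) * norm (F w0 0))"
        by (simp add: algebra_simps)
      also have "\<dots> \<le> (B * B * norm (F 0 w0 - F 0 w)) * (K * K)"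
      proof (rule mult_left_mono)
        show "norm (F w 0) * norm (F w0 0) \<le> K * K"
          using K[of w 0] K[of w0 0] w w0 K0 by (intro mult_mono) auto
      qed simp
      also have "\<dots> = B * B * K * K * norm (F 0 w0 - F 0 w)" by (simp add: algebra_simps)
      finally show "norm (F w 0 - F w0 0) \<le> B * B * K * K * norm (F 0 w0 - F 0 w)" .
    qed
    have "((\<lambda>w. F w 0 - F w0 0) \<longlongrightarrow> 0) (at w0 within {0..1})"
      by (rule Lim_null_comparison[OF ev lim])
    then show "((\<lambda>w. F w 0) \<longlongrightarrow> F w0 0) (at w0 within {0..1})"
      by (rule LIM_zero_cancel)
  qed
  have fe: "F 0 u ** F w 0 = F w u" if "w \<in> {0..1}" for w
  proof -
    have "F w u = F 0 u ** F w 0" by (rule flow) (use that u in auto)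
    then show ?thesis by (rule sym)
  qed
  have ce: "continuous_on {0..1} (\<lambda>w. F 0 u ** F w 0)"
    by (rule bounded_bilinear.continuous_on[OF bb_mm continuous_on_const c0])
  show ?thesis
    by (rule continuous_on_eq[OF ce]) (rule fe)
qed

end



locale treectx =
  fixes l m r :: "nat \<Rightarrow> nat \<Rightarrow> real"
  assumes lmr: "\<And>n k. 1 \<le> n \<Longrightarrow> k < 2^(n-1) \<Longrightarrow> l n k < m n k \<and> m n k < r n k"
    and l10: "l 1 0 = 0" and r10: "r 1 0 = 1"
    and refine_l: "\<And>n k. 1 \<le> n \<Longrightarrow> k < 2^(n-1) \<Longrightarrow> l (n+1) (2*k) = l n k"
    and refine_m1: "\<And>n k. 1 \<le> n \<Longrightarrow> k < 2^(n-1) \<Longrightarrow> r (n+1) (2*k) = m n k"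
    and refine_m2: "\<And>n k. 1 \<le> n \<Longrightarrow> k < 2^(n-1) \<Longrightarrow> l (n+1) (2*k+1) = m n k"
    and refine_r: "\<And>n k. 1 \<le> n \<Longrightarrow> k < 2^(n-1) \<Longrightarrow> r (n+1) (2*k+1) = r n k"
begin

lemma pow_suc: "1 \<le> n \<Longrightarrow> (2::nat)^(n+1-1) = 2 * 2^(n-1)"
  by (cases n) auto

lemma consec: "1 \<le> n \<Longrightarrow> k + 1 < 2^(n-1) \<Longrightarrow> r n k = l n (k+1)"
proof (induction n arbitrary: k rule: nat_induct_at_least)
  case base then show ?case by simp
next
  case (Suc n)
  have p: "(2::nat)^(Suc n - 1) = 2 * 2^(n-1)" using Suc.hyps pow_suc by simp
  obtain q b where kq: "k = 2 * q + b" and b: "b < 2" by (metis div_mult_mod_eq mod_less_divisor zero_less_numeral mult.commute)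
  show ?case
  proof (cases "b = 0")
    case True
    then have q: "q < 2^(n-1)" using Suc.prems p kq by simp
    show ?thesis using refine_m1[OF Suc.hyps q] refine_m2[OF Suc.hyps q] kq True by simp
  next
    case False
    then have b1: "b = 1" using b by simp
    then have q: "q + 1 < 2^(n-1)" using Suc.prems p kq by simp
    have q': "q < 2^(n-1)" using q by simp
    have "r (Suc n) k = r n q" using refine_r[OF Suc.hyps q'] kq b1 by simp
    also have "\<dots> = l n (q + 1)" using Suc.IH[OF q] .
    also have "\<dots> = l (Suc n) (2 * (q + 1))" using refine_l[OF Suc.hyps q] by simp
    finally show ?thesis using kq b1 by simp
  qed
qed

lemma order_lr: "1 \<le> n \<Longrightarrow> j < k \<Longrightarrow> k < 2^(n-1) \<Longrightarrow> r n j \<le> l n k"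
proof (induction k)
  case 0 then show ?case by simp
next
  case (Suc k)
  show ?case
  proof (cases "j = k")
    case True then show ?thesis using consec[of n k] Suc.prems by simp
  next
    case False
    then have "j < k" using Suc.prems by simp
    then have "r n j \<le> l n k" using Suc by simp
    also have "\<dots> < r n k" using lmr[of n k] Suc.prems by simp
    also have "\<dots> = l n (Suc k)" using consec[of n k] Suc.prems by simp
    finally show ?thesis by simp
  qed
qed

lemma mono_l: "1 \<le> n \<Longrightarrow> j \<le> k \<Longrightarrow> k < 2^(n-1) \<Longrightarrow> l n j \<le> l n k"
  using order_lr[of n j k] lmr[of n j] by (cases "j = k") auto

lemma first_l: "1 \<le> n \<Longrightarrow> l n 0 = 0"
proof (induction n rule: nat_induct_at_least)
  case base then show ?case using l10 by simp
next
  case (Suc n) then show ?case using refine_l[of n 0] by simp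
qed

lemma last_r: "1 \<le> n \<Longrightarrow> r n (2^(n-1) - 1) = 1"
proof (induction n rule: nat_induct_at_least)
  case base then show ?case using r10 by simp
next
  case (Suc n)
  have p: "(2::nat)^(Suc n - 1) = 2 * 2^(n-1)" using Suc.hyps pow_suc by simp
  have one: "(1::nat) \<le> 2^(n-1)" by simp
  have "(2::nat)^(Suc n - 1) - 1 = 2 * (2^(n-1) - 1) + 1" using p one by arith
  then show ?case using refine_r[of n "2^(n-1) - 1"] Suc by simp
qed

lemma bounds: "1 \<le> n \<Longrightarrow> k < 2^(n-1) \<Longrightarrow> 0 \<le> l n k \<and> r n k \<le> 1"
proof
  assume n: "1 \<le> n" and k: "k < 2^(n-1)"
  show "0 \<le> l n k" using mono_l[OF n _ k, of 0] first_l[OF n] by simp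
  show "r n k \<le> 1"
  proof (cases "k = 2^(n-1) - 1")
    case True then show ?thesis using last_r[OF n] by simp
  next
    case False
    then have "k < 2^(n-1) - 1" using k by simp
    then have "r n k \<le> l n (2^(n-1) - 1)" using order_lr[OF n] by simp
    also have "\<dots> < r n (2^(n-1) - 1)" using lmr[OF n, of "2^(n-1) - 1"] by simp
    finally show ?thesis using last_r[OF n] by simp
  qed
qed

lemma endpoint: "1 \<le> i \<Longrightarrow> j < 2^(i-1) \<Longrightarrow>
    l (i+1+d) ((2*j+1)*2^d) = m i j \<and> (2*j+1)*2^d < (2::nat)^(i+d)"
proof (induction d)
  case 0
  have "2*j+1 < 2 * 2^(i-1)" using 0 by simp
  also have "2 * 2^(i-1) = (2::nat)^i" using 0 by (cases i) auto
  finally show ?case using refine_m2[OF 0] by simp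
next
  case (Suc d)
  then have IH: "l (i+1+d) ((2*j+1)*2^d) = m i j" "(2*j+1)*2^d < (2::nat)^(i+d)" by auto
  have n: "1 \<le> i+1+d" by simp
  have k: "(2*j+1)*2^d < 2^(i+1+d-1)" using IH(2) by simp
  have "l (i+1+Suc d) ((2*j+1)*2^Suc d) = l (i+1+d+1) (2*((2*j+1)*2^d))" by (simp add: algebra_simps)
  also have "\<dots> = m i j" using refine_l[OF n k] IH(1) by simp
  finally show ?case using IH(2) by simp
qed

lemma pos_bounds: "1 \<le> i \<Longrightarrow> j < 2^(i-1) \<Longrightarrow> 2^(i-1) \<le> pos (i,j) \<and> pos (i,j) < (2::nat)^i"
proof -
  assume "1 \<le> i" "j < 2^(i-1)"
  moreover have "(2::nat)^i = 2 * 2^(i-1)" using \<open>1 \<le> i\<close> by (cases i) auto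
  ultimately show ?thesis by (simp add: pos_def)
qed

lemma zero_pos:
  assumes n: "1 \<le> n" and k: "k < 2^(n-1)"
    and q: "q \<in> Iset" and lt: "pos q < pos (n,k)"
  shows "midpt m q \<le> l n k \<or> r n k \<le> midpt m q"
proof (cases "fst q = 0")
  case True
  then show ?thesis using bounds[OF n k] by (simp add: midpt_def)
next
  case False
  obtain i j where qij: "q = (i,j)" by (cases q)
  have i: "1 \<le> i" and j: "j < 2^(i-1)" using q False qij by (auto simp: Iset_def)
  have t: "midpt m q = m i j" using qij i by (simp add: midpt_def)
  have pq: "2^(i-1) \<le> pos (i,j)" "pos (i,j) < (2::nat)^i" using pos_bounds[OF i j] by auto
  have pp: "2^(n-1) \<le> pos (n,k)" "pos (n,k) < (2::nat)^n" using pos_bounds[OF n k] by auto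
  have "i \<le> n"
  proof (rule ccontr)
    assume "\<not> i \<le> n"
    then have "n \<le> i - 1" by simp
    then have "(2::nat)^n \<le> 2^(i-1)" by (simp add: power_increasing)
    then show False using pq(1) pp(2) lt[unfolded qij] by linarith
  qed
  then consider "i = n" | "i < n" by fastforce
  then show ?thesis
  proof cases
    case 1
    then have "j < k" using lt[unfolded qij] n by (simp add: pos_def split: if_splits)
    then have "m i j < r n j" "r n j \<le> l n k" using lmr[of n j] order_lr[OF n _ k] 1 i j by auto
    then show ?thesis using t 1 by simp
  next
    case 2
    then obtain d where d: "n = i + 1 + d" using less_imp_Suc_add by fastforce
    define k' where "k' = (2*j+1)*2^d"
    have e: "l n k' = m i j" "k' < 2^(n-1)" using endpoint[OF i j, of d] d by (auto simp: k'_def)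
    show ?thesis
    proof (cases "k' \<le> k")
      case True
      then show ?thesis using mono_l[OF n True k] e t by simp
    next
      case False
      then show ?thesis using order_lr[OF n _ e(2), of k] e t by simp
    qed
  qed
qed

end



lemma (in prob_space) gauss_facts:
  assumes D: "distributed M lborel X std_normal_density"
  shows "integrable M X" "expectation X = 0"
    "integrable M (\<lambda>\<omega>. X \<omega> * X \<omega>)" "expectation (\<lambda>\<omega>. X \<omega> * X \<omega>) = 1"
proof -
  have nn: "\<And>x. 0 \<le> std_normal_density x" by simp
  have "integrable lborel (\<lambda>x. std_normal_density x * x ^ 1)" by (rule integrable_std_normal_moment)
  then show "integrable M X"
    using distributed_integrable[OF D, of "\<lambda>x. x"] by simp
  show "expectation X = 0" by (rule standard_normal_distributed_expectation[OF D])
  have "integrable lborel (\<lambda>x. std_normal_density x * x ^ 2)" by (rule integrable_std_normal_moment)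
  then have "integrable M (\<lambda>\<omega>. (X \<omega>)^2)"
    using distributed_integrable[OF D, of "\<lambda>x. x^2"] by simp
  then show "integrable M (\<lambda>\<omega>. X \<omega> * X \<omega>)" by (simp add: power2_eq_square)
  have "expectation (\<lambda>\<omega>. (X \<omega>)^2) = integral\<^sup>L lborel (\<lambda>x. std_normal_density x * x ^ 2)"
    using distributed_integral[OF D, of "\<lambda>x. x^2"] by simp
  also have "\<dots> = 1" using integral_std_normal_moment_even[of 1] by simp
  finally show "expectation (\<lambda>\<omega>. X \<omega> * X \<omega>) = 1" by (simp add: power2_eq_square)
qed

lemma (in prob_space) cov_lin:
  fixes \<xi> :: "'i \<Rightarrow> 'a \<Rightarrow> real"
  assumes ind: "indep_vars (\<lambda>_. borel) \<xi> I"
    and D: "\<And>e. e \<in> I \<Longrightarrow> distributed M lborel (\<xi> e) std_normal_density"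
    and E: "finite E" "E \<subseteq> I"
  shows "covariance M (\<lambda>\<omega>. \<Sum>e\<in>E. a e * \<xi> e \<omega>) (\<lambda>\<omega>. \<Sum>e\<in>E. b e * \<xi> e \<omega>) = (\<Sum>e\<in>E. a e * b e)"
proof -
  note G = gauss_facts[OF D]
  have int1: "integrable M (\<xi> e)" if "e \<in> I" for e using G(1)[OF that] .
  have pr: "integrable M (\<lambda>\<omega>. \<xi> e \<omega> * \<xi> f \<omega>) \<and> expectation (\<lambda>\<omega>. \<xi> e \<omega> * \<xi> f \<omega>) = (if e = f then 1 else 0)"
    if e: "e \<in> I" and f: "f \<in> I" for e f
  proof (cases "e = f")
    case True then show ?thesis using G(3,4)[OF e] by simp
  next
    case False
    have sub: "indep_vars (\<lambda>_. borel) \<xi> {e, f}" using indep_vars_subset[OF ind] e f by auto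
    have i2: "\<And>i. i \<in> {e, f} \<Longrightarrow> integrable M (\<xi> i)" using int1 e f by auto
    have "integrable M (\<lambda>\<omega>. \<Prod>i\<in>{e, f}. \<xi> i \<omega>)"
      by (rule indep_vars_integrable[OF _ sub i2]) simp
    moreover have "expectation (\<lambda>\<omega>. \<Prod>i\<in>{e, f}. \<xi> i \<omega>) = (\<Prod>i\<in>{e, f}. expectation (\<xi> i))"
      by (rule indep_vars_lebesgue_integral[OF _ sub i2]) simp
    ultimately show ?thesis using False G(2)[OF e] G(2)[OF f] by simp
  qed
  have mean0: "expectation (\<lambda>\<omega>. \<Sum>e\<in>E. c e * \<xi> e \<omega>) = 0" for c
  proof -
    have "expectation (\<lambda>\<omega>. \<Sum>e\<in>E. c e * \<xi> e \<omega>) = (\<Sum>e\<in>E. expectation (\<lambda>\<omega>. c e * \<xi> e \<omega>))"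
      by (rule Bochner_Integration.integral_sum) (use E int1 in auto)
    also have "\<dots> = 0" using E G(2) by (intro sum.neutral) auto
    finally show ?thesis .
  qed
  have prod: "(\<Sum>e\<in>E. a e * \<xi> e \<omega>) * (\<Sum>e\<in>E. b e * \<xi> e \<omega>) =
      (\<Sum>e\<in>E. \<Sum>f\<in>E. a e * b f * (\<xi> e \<omega> * \<xi> f \<omega>))" for \<omega>
    by (simp add: sum_product algebra_simps)
  have "covariance M (\<lambda>\<omega>. \<Sum>e\<in>E. a e * \<xi> e \<omega>) (\<lambda>\<omega>. \<Sum>e\<in>E. b e * \<xi> e \<omega>)
      = expectation (\<lambda>\<omega>. \<Sum>e\<in>E. \<Sum>f\<in>E. a e * b f * (\<xi> e \<omega> * \<xi> f \<omega>))"
    unfolding covariance_def mean0 by (simp only: diff_zero prod)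
  also have "\<dots> = (\<Sum>e\<in>E. \<Sum>f\<in>E. a e * b f * expectation (\<lambda>\<omega>. \<xi> e \<omega> * \<xi> f \<omega>))"
  proof -
    have ip: "integrable M (\<lambda>\<omega>. a e * b f * (\<xi> e \<omega> * \<xi> f \<omega>))" if "e \<in> E" "f \<in> E" for e f
      using pr[of e f] that E by auto
    have "expectation (\<lambda>\<omega>. \<Sum>e\<in>E. \<Sum>f\<in>E. a e * b f * (\<xi> e \<omega> * \<xi> f \<omega>))
        = (\<Sum>e\<in>E. expectation (\<lambda>\<omega>. \<Sum>f\<in>E. a e * b f * (\<xi> e \<omega> * \<xi> f \<omega>)))"
      by (rule Bochner_Integration.integral_sum) (use ip in \<open>auto intro!: Bochner_Integration.integrable_sum\<close>)
    also have "\<dots> = (\<Sum>e\<in>E. \<Sum>f\<in>E. expectation (\<lambda>\<omega>. a e * b f * (\<xi> e \<omega> * \<xi> f \<omega>)))"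
      by (intro sum.cong refl Bochner_Integration.integral_sum) (use ip in auto)
    also have "\<dots> = (\<Sum>e\<in>E. \<Sum>f\<in>E. a e * b f * expectation (\<lambda>\<omega>. \<xi> e \<omega> * \<xi> f \<omega>))"
      by simp
    finally show ?thesis .
  qed
  also have "\<dots> = (\<Sum>e\<in>E. \<Sum>f\<in>E. a e * b f * (if e = f then 1 else 0))"
  proof -
    have pe: "\<And>e f. e \<in> E \<Longrightarrow> f \<in> E \<Longrightarrow> expectation (\<lambda>\<omega>. \<xi> e \<omega> * \<xi> f \<omega>) = (if e = f then 1 else 0)"
      using pr E by blast
    show ?thesis by (intro sum.cong refl) (simp add: pe)
  qed
  also have "\<dots> = (\<Sum>e\<in>E. a e * b e)"
    using E by (simp add: if_distrib cong: if_cong)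
  finally show ?thesis .
qed



definition pdm :: "real^'n^'n \<Rightarrow> bool" where
  "pdm P \<longleftrightarrow> (\<forall>x. x \<noteq> 0 \<longrightarrow> x \<bullet> (P *v x) > 0)"

lemma inv_vec_zero:
  fixes A :: "real^'n^'n"
  assumes "invertible A" "A *v x = 0"
  shows "x = 0"
proof -
  have "x = (matrix_inv A ** A) *v x" using minv_l[OF assms(1)] by simp
  also have "\<dots> = 0" using assms(2) by (simp flip: matrix_vector_mul_assoc)
  finally show ?thesis .
qed

lemma dot_mv: "(x::real^'n) \<bullet> ((A::real^'n^'n) *v y) = (transpose A *v x) \<bullet> y"
  by (simp add: dot_lmul_matrix)

lemma pd_congr:
  fixes A P :: "real^'n^'n"
  assumes A: "invertible A" and P: "pdm P"
  shows "pdm (A ** P ** transpose A)"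
  unfolding pdm_def
proof (intro allI impI)
  fix x :: "real^'n" assume x: "x \<noteq> 0"
  have y: "transpose A *v x \<noteq> 0"
    using inv_vec_zero[OF transpose_invertible[OF A]] x by blast
  have "x \<bullet> ((A ** P ** transpose A) *v x) = x \<bullet> (A *v (P *v (transpose A *v x)))"
    by (simp only: matrix_vector_mul_assoc matrix_mul_assoc)
  also have "\<dots> = (transpose A *v x) \<bullet> (P *v (transpose A *v x))" by (rule dot_mv)
  finally show "x \<bullet> ((A ** P ** transpose A) *v x) > 0" using P y unfolding pdm_def by simp
qed

lemma pd_invertible:
  fixes P :: "real^'n^'n"
  assumes P: "pdm P"
  shows "invertible P"
proof -
  have "inj ((*v) P)"
  proof (rule injI)
    fix x y assume e: "P *v x = P *v y"
    have "P *v (x - y) = 0" using e by (simp add: matrix_vector_mult_diff_distrib)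
    then show "x = y" using P unfolding pdm_def by (metis inner_zero_right less_irrefl right_minus_eq)
  qed
  then show ?thesis
    using matrix_left_invertible_injective invertible_left_inverse by blast
qed

lemma pd_inv:
  fixes P :: "real^'n^'n"
  assumes P: "pdm P"
  shows "pdm (matrix_inv P)"
  unfolding pdm_def
proof (intro allI impI)
  fix x :: "real^'n" assume x: "x \<noteq> 0"
  have inv: "invertible P" by (rule pd_invertible[OF P])
  define y where "y = matrix_inv P *v x"
  have xy: "x = P *v y" unfolding y_def using minv_r[OF inv] by (simp add: matrix_vector_mul_assoc)
  have "y \<noteq> 0" using x xy by auto
  then have "y \<bullet> (P *v y) > 0" using P unfolding pdm_def by blast
  then show "x \<bullet> (matrix_inv P *v x) > 0" by (simp add: xy[symmetric] y_def[symmetric] inner_commute)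
qed

lemma pd_add: "pdm A \<Longrightarrow> pdm B \<Longrightarrow> pdm (A + B)"
  unfolding pdm_def by (simp add: matrix_vector_mult_add_rdistrib inner_add_right add_pos_pos)

lemma transpose_add: "transpose ((A::real^'n^'m) + B) = transpose A + transpose B"
  by (simp add: transpose_def vec_eq_iff)

lemma minv_transpose:
  fixes C :: "real^'n^'n"
  assumes "invertible C"
  shows "transpose (matrix_inv C) = matrix_inv (transpose C)"
proof -
  have "transpose C ** transpose (matrix_inv C) = mat 1"
    using minv_l[OF assms] by (metis matrix_transpose_mul transpose_mat)
  then show ?thesis by (simp add: minv_unique)
qed

lemma sym_minv: "invertible (C::real^'n^'n) \<Longrightarrow> transpose C = C \<Longrightarrow> transpose (matrix_inv C) = matrix_inv C"
  using minv_transpose by metis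

lemma sigma_pd:
  fixes A B :: "real^'n^'n"
  assumes A: "pdm A" "transpose A = A" and B: "pdm B" "transpose B = B"
  shows "pdm (A ** matrix_inv (A + B) ** B) \<and> transpose (A ** matrix_inv (A + B) ** B) = A ** matrix_inv (A + B) ** B"
proof -
  have iA: "invertible A" and iB: "invertible B" and iAB: "invertible (A + B)"
    using pd_invertible A B pd_add by blast+
  define S where "S = A ** matrix_inv (A + B) ** B"
  define C where "C = matrix_inv A + matrix_inv B"
  have "S ** C = A ** matrix_inv (A + B) ** (B ** matrix_inv A) + A ** matrix_inv (A + B) ** (B ** matrix_inv B)"
    by (simp add: S_def C_def matrix_add_ldistrib matrix_mul_assoc)
  also have "\<dots> = A ** matrix_inv (A + B) ** (B ** matrix_inv A + A ** matrix_inv A)"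
    by (simp add: minv_r[OF iB] minv_r[OF iA] matrix_add_ldistrib)
  also have "\<dots> = A ** matrix_inv (A + B) ** ((A + B) ** matrix_inv A)"
  proof -
    have "(A + B) ** matrix_inv A = B ** matrix_inv A + A ** matrix_inv A"
      by (simp add: mm_add_r add.commute)
    then show ?thesis by simp
  qed
  also have "\<dots> = A ** (matrix_inv (A + B) ** (A + B)) ** matrix_inv A"
    by (simp only: matrix_mul_assoc)
  also have "\<dots> = mat 1" by (simp add: minv_l[OF iAB] minv_r[OF iA])
  finally have SC: "S ** C = mat 1" .
  then have CS: "C ** S = mat 1" using matrix_left_right_inverse by blast
  have Spd: "pdm S"
  proof -
    have "pdm C" unfolding C_def by (intro pd_add pd_inv A B)
    then have "pdm (matrix_inv C)" by (rule pd_inv)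
    moreover have "matrix_inv C = S" using CS by (rule minv_unique)
    ultimately show ?thesis by simp
  qed
  have Ct: "transpose C = C"
    unfolding C_def transpose_add using sym_minv[OF iA A(2)] sym_minv[OF iB B(2)] by simp
  have iC: "invertible C" using CS SC unfolding invertible_def by blast
  have "transpose S = S"
    using sym_minv[OF iC Ct] minv_unique[OF CS] by simp
  then show ?thesis using Spd by (simp add: S_def)
qed


locale hctx = flowctx alpha F
  for alpha :: "real \<Rightarrow> ('d::{finite,linorder}) sqm" and F :: "real \<Rightarrow> real \<Rightarrow> 'd sqm" +
  fixes sqrtGam :: "real \<Rightarrow> ((real, 'm::finite) vec, 'd) vec" and Gam :: "real \<Rightarrow> 'd sqm"
  assumes sqrtGam_cont: "continuous_on {0..1} sqrtGam"
    and Gam_def: "\<And>t. Gam t = sqrtGam t ** transpose (sqrtGam t)"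
    and nondeg: "\<And>u v (x::'d rvec). 0 \<le> u \<Longrightarrow> u < v \<Longrightarrow> v \<le> 1 \<Longrightarrow> x \<noteq> 0 \<Longrightarrow>
        x \<bullet> ((F u v ** hu F Gam u u v ** transpose (F u v)) *v x) > 0"
begin

lemma GamC: "continuous_on {0..1} Gam"
proof -
  have "Gam = (\<lambda>t. sqrtGam t ** transpose (sqrtGam t))" by (rule ext, rule Gam_def)
  moreover have "continuous_on {0..1} (\<lambda>t. sqrtGam t ** transpose (sqrtGam t))"
    by (rule bounded_bilinear.continuous_on[OF bb_mm sqrtGam_cont
          bounded_linear.continuous_on[OF bl_transpose sqrtGam_cont]])
  ultimately show ?thesis by simp
qed

lemma Gsym: "transpose (Gam t) = Gam t"
  by (simp add: Gam_def matrix_transpose_mul)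

lemma IC: "u \<in> {0..1} \<Longrightarrow> continuous_on {0..1} (\<lambda>w. F w u ** Gam w ** transpose (F w u))"
  by (intro bounded_bilinear.continuous_on[OF bb_mm] GamC contF1
      bounded_linear.continuous_on[OF bl_transpose])

lemma Iint: "u \<in> {0..1} \<Longrightarrow> a \<in> {0..1} \<Longrightarrow> b \<in> {0..1} \<Longrightarrow>
    (\<lambda>w. F w u ** Gam w ** transpose (F w u)) integrable_on {a..b}"
  by (rule integrable_continuous_interval, rule continuous_on_subset[OF IC]) auto

lemma bl_sand:
  fixes C D :: "'d sqm"
  shows "bounded_linear (\<lambda>X::'d sqm. C ** X ** D)"
proof -
  have "bounded_linear (\<lambda>X::'d sqm. C ** X)" by (rule bounded_bilinear.bounded_linear_right[OF bb_mm])
  moreover have "bounded_linear (\<lambda>Y::'d sqm. Y ** D)" by (rule bounded_bilinear.bounded_linear_left[OF bb_mm])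
  ultimately show ?thesis using bounded_linear_compose[of "\<lambda>Y::'d sqm. Y ** D" "\<lambda>X::'d sqm. C ** X"]
    by (simp add: o_def)
qed

lemma hu_change:
  assumes u: "u \<in> {0..1}" and v: "v \<in> {0..1}" and a: "a \<in> {0..1}" and b: "b \<in> {0..1}"
  shows "hu F Gam v a b = F u v ** hu F Gam u a b ** transpose (F u v)"
proof -
  have "hu F Gam v a b = integral {a..b} ((\<lambda>X. F u v ** X ** transpose (F u v)) \<circ> (\<lambda>w. F w u ** Gam w ** transpose (F w u)))"
    unfolding hu_def
  proof (rule integral_cong)
    fix w assume "w \<in> {a..b}"
    then have w: "w \<in> {0..1}" using a b by auto
    have "F w v = F u v ** F w u" using flow[OF w u v] .
    then show "F w v ** Gam w ** transpose (F w v) =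
        ((\<lambda>X. F u v ** X ** transpose (F u v)) \<circ> (\<lambda>w. F w u ** Gam w ** transpose (F w u))) w"
      by (simp add: matrix_transpose_mul matrix_mul_assoc)
  qed
  also have "\<dots> = F u v ** hu F Gam u a b ** transpose (F u v)"
    unfolding hu_def by (rule integral_linear[OF Iint[OF u a b] bl_sand])
  finally show ?thesis .
qed

lemma hu_sym:
  assumes u: "u \<in> {0..1}" and a: "a \<in> {0..1}" and b: "b \<in> {0..1}"
  shows "transpose (hu F Gam u a b) = hu F Gam u a b"
proof -
  have "transpose (hu F Gam u a b) = integral {a..b} (transpose \<circ> (\<lambda>w. F w u ** Gam w ** transpose (F w u)))"
    unfolding hu_def by (rule integral_linear[OF Iint[OF u a b] bl_transpose, symmetric])
  also have "\<dots> = hu F Gam u a b"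
    unfolding hu_def by (rule integral_cong) (simp add: matrix_transpose_mul Gsym matrix_mul_assoc)
  finally show ?thesis .
qed

lemma hu_combine:
  assumes u: "u \<in> {0..1}" and a: "0 \<le> a" and ac: "a \<le> c" and cb: "c \<le> b" and b: "b \<le> 1"
  shows "hu F Gam u a b = hu F Gam u a c + hu F Gam u c b"
  unfolding hu_def by (rule Henstock_Kurzweil_Integration.integral_combine[OF ac cb Iint[OF u], symmetric]) (use a ac cb b in auto)

lemma hu_refl: "hu F Gam u a a = 0"
  by (simp add: hu_def)

lemma hu_pd:
  assumes u: "u \<in> {0..1}" and a: "0 \<le> a" and ab: "a < b" and b: "b \<le> 1"
  shows "pdm (hu F Gam u a b)"
proof -
  have a1: "a \<in> {0..1}" and b1: "b \<in> {0..1}" using a ab b by auto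
  have "pdm (F a b ** hu F Gam a a b ** transpose (F a b))"
    unfolding pdm_def using nondeg[OF a ab b] by blast
  then have "pdm (hu F Gam b a b)" using hu_change[OF a1 b1 a1 b1] by simp
  then have "pdm (F b u ** hu F Gam b a b ** transpose (F b u))"
    by (rule pd_congr[OF Finvertible[OF b1 u]])
  then show ?thesis using hu_change[OF b1 u a1 b1] by simp
qed

lemma S0_props:
  "pdm (gg F 1 ** hh F Gam 0 1 ** transpose (gg F 1)) \<and>
   transpose (gg F 1 ** hh F Gam 0 1 ** transpose (gg F 1)) = gg F 1 ** hh F Gam 0 1 ** transpose (gg F 1)"
proof
  show "pdm (gg F 1 ** hh F Gam 0 1 ** transpose (gg F 1))"
    unfolding pdm_def gg_def hh_def using nondeg[of 0 1] by simp
  have "transpose (hu F Gam 0 0 1) = hu F Gam 0 0 1" by (rule hu_sym) auto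
  then show "transpose (gg F 1 ** hh F Gam 0 1 ** transpose (gg F 1)) = gg F 1 ** hh F Gam 0 1 ** transpose (gg F 1)"
    by (simp add: gg_def hh_def matrix_transpose_mul matrix_mul_assoc)
qed

lemma SigmaNK_props:
  assumes l: "0 \<le> l n k" and lm: "l n k < m n k" and mr: "m n k < r n k" and r: "r n k \<le> 1"
  shows "pdm (SigmaNK F Gam l m r n k) \<and> transpose (SigmaNK F Gam l m r n k) = SigmaNK F Gam l m r n k"
proof -
  have m1: "m n k \<in> {0..1}" and l1: "l n k \<in> {0..1}" and r1: "r n k \<in> {0..1}" using l lm mr r by auto
  have c: "hu F Gam (m n k) (l n k) (r n k) = hu F Gam (m n k) (l n k) (m n k) + hu F Gam (m n k) (m n k) (r n k)"
    by (rule hu_combine[OF m1 l _ _ r]) (use lm mr in auto)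
  have A: "pdm (hu F Gam (m n k) (l n k) (m n k))" "transpose (hu F Gam (m n k) (l n k) (m n k)) = hu F Gam (m n k) (l n k) (m n k)"
    using hu_pd[OF m1 l lm] hu_sym[OF m1 l1 m1] lm mr r by auto
  have B: "pdm (hu F Gam (m n k) (m n k) (r n k))" "transpose (hu F Gam (m n k) (m n k) (r n k)) = hu F Gam (m n k) (m n k) (r n k)"
    using hu_pd[OF m1 _ mr r] hu_sym[OF m1 m1 r1] l lm by auto
  show ?thesis unfolding SigmaNK_def c using sigma_pd[OF A B] .
qed

end


lemma sym_of_transpose: "transpose (S::real^'n^'n) = S \<Longrightarrow> S $ a $ b = S $ b $ a"
  by (metis transpose_def vec_lambda_beta)

lemma pdm_chol:
  fixes S :: "('d::{finite,linorder}) sqm"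
  assumes "pdm S" "transpose S = S"
  shows "lower_tri (chol S) \<and> (\<forall>i. chol S $ i $ i > 0)"
  using chol_props[of S] assms sym_of_transpose[OF assms(2)] unfolding pdm_def by blast

lemma cancel_inv:
  fixes G H S :: "real^'n^'n"
  assumes G: "invertible G" and H: "invertible H"
  shows "G ** H ** (matrix_inv H ** matrix_inv G ** S) = S"
proof -
  have "G ** H ** (matrix_inv H ** matrix_inv G ** S) = G ** (H ** matrix_inv H) ** matrix_inv G ** S"
    by (simp only: matrix_mul_assoc)
  also have "\<dots> = (G ** matrix_inv G) ** S" by (simp add: minv_r[OF H] matrix_mul_assoc)
  also have "\<dots> = S" by (simp add: minv_r[OF G])
  finally show ?thesis .
qed

locale allctx = hctx alpha F sqrtGam Gam + treectx l m r
  for alpha :: "real \<Rightarrow> ('d::{finite,linorder}) sqm" and F :: "real \<Rightarrow> real \<Rightarrow> 'd sqm"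
    and sqrtGam :: "real \<Rightarrow> ((real, 'm::finite) vec, 'd) vec" and Gam :: "real \<Rightarrow> 'd sqm"
    and l m r :: "nat \<Rightarrow> nat \<Rightarrow> real"
begin

lemma Iset_cases:
  assumes "p \<in> Iset"
  obtains "p = (0,0)" | n k where "p = (n,k)" "1 \<le> n" "k < 2^(n-1)"
  using assms unfolding Iset_def by auto

lemma sig_props:
  assumes p: "p \<in> Iset"
  shows "lower_tri (sigmaNK F Gam l m r p) \<and> (\<forall>i. sigmaNK F Gam l m r p $ i $ i > 0)"
  using p
proof (cases rule: Iset_cases)
  case 1
  then show ?thesis using pdm_chol[OF conjunct1[OF S0_props] conjunct2[OF S0_props]]
    by (simp add: sigmaNK_def)
next
  case (2 n k)
  have "pdm (SigmaNK F Gam l m r n k) \<and> transpose (SigmaNK F Gam l m r n k) = SigmaNK F Gam l m r n k"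
    using SigmaNK_props bounds[OF 2(2,3)] lmr[OF 2(2,3)] by blast
  then show ?thesis using pdm_chol[of "SigmaNK F Gam l m r n k"] 2 by (simp add: sigmaNK_def)
qed

lemma psi_diag:
  assumes p: "p \<in> Iset"
  shows "psi F Gam l m r p (midpt m p) = sigmaNK F Gam l m r p"
  using p
proof (cases rule: Iset_cases)
  case 1
  have H: "invertible (hh F Gam 0 1)"
    unfolding hh_def by (rule pd_invertible, rule hu_pd) auto
  have G: "invertible (gg F 1)" unfolding gg_def by (rule Finvertible) auto
  show ?thesis using 1 cancel_inv[OF G H] by (simp add: psi_def midpt_def Lmat_def)
next
  case (2 n k)
  have b: "0 \<le> l n k" "r n k \<le> 1" "l n k < m n k" "m n k < r n k" using bounds[OF 2(2,3)] lmr[OF 2(2,3)] by auto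
  have H: "invertible (hh F Gam (l n k) (m n k))"
    unfolding hh_def by (rule pd_invertible, rule hu_pd) (use b in auto)
  have G: "invertible (gg F (m n k))" unfolding gg_def by (rule Finvertible) (use b in auto)
  show ?thesis using 2 cancel_inv[OF G H] b by (simp add: psi_def midpt_def Lmat_def Let_def)
qed

lemma psi_zero:
  assumes p: "p \<in> Iset" and q: "q \<in> Iset" and lt: "pos q < pos p"
  shows "psi F Gam l m r p (midpt m q) = 0"
  using p
proof (cases rule: Iset_cases)
  case 1
  then show ?thesis using lt by (simp add: pos_def)
next
  case (2 n k)
  have b: "l n k < m n k" "m n k < r n k" using lmr[OF 2(2,3)] by auto
  have z: "midpt m q \<le> l n k \<or> r n k \<le> midpt m q"
    using zero_pos[OF 2(2,3) q] lt 2(1) by simp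
  have hz: "hh F Gam x x = 0" for x by (simp add: hh_def hu_refl)
  show ?thesis
    using z b 2(1,2) by (auto simp: psi_def Let_def hz)
qed

end

lemma finite_IsetN: "finite (IsetN N)"
proof -
  have "IsetN N \<subseteq> {0..N} \<times> {0..<2^N}"
  proof
    fix p assume "p \<in> IsetN N"
    then show "p \<in> {0..N} \<times> {0..<2^N}"
      unfolding IsetN_def Iset_def
      by (auto elim!: less_le_trans intro: power_increasing)
  qed
  then show ?thesis by (rule finite_subset) auto
qed

lemma IsetN_sub: "IsetN N \<subseteq> Iset"
  unfolding IsetN_def Iset_def by auto

theorem lemma2:
  fixes alpha :: "real \<Rightarrow> ('d::{finite,linorder}) sqm"
    and sqrtGam :: "real \<Rightarrow> ((real, 'm::finite) vec, 'd::{finite,linorder}) vec"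
    and Gam :: "real \<Rightarrow> ('d::{finite,linorder}) sqm"
    and F :: "real \<Rightarrow> real \<Rightarrow> ('d::{finite,linorder}) sqm"
    and rho :: real
    and l m r :: "nat \<Rightarrow> nat \<Rightarrow> real"
    and M :: "'a measure"
    and Xi :: "nat \<times> nat \<Rightarrow> 'a \<Rightarrow> ('d::{finite,linorder}) rvec"
    and N :: nat
  assumes alpha_cont: "continuous_on {0..1} alpha"
    and sqrtGam_cont: "continuous_on {0..1} sqrtGam"
    and Gam_def: "\<And>t. Gam t = sqrtGam t ** transpose (sqrtGam t)"
    and flow_deriv: "\<And>s t. s \<in> {0..1} \<Longrightarrow> t \<in> {0..1} \<Longrightarrow>
        ((\<lambda>t. F s t) has_vector_derivative (alpha t ** F s t)) (at t within {0..1})"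
    and flow_init: "\<And>s. s \<in> {0..1} \<Longrightarrow> F s s = mat 1"
    and nondeg: "\<And>u v (x::('d::{finite,linorder}) rvec). 0 \<le> u \<Longrightarrow> u < v \<Longrightarrow> v \<le> 1 \<Longrightarrow> x \<noteq> 0 \<Longrightarrow>
        x \<bullet> ((F u v ** hu F Gam u u v ** transpose (F u v)) *v x) > 0"
    and rho: "0 < rho" "rho < 1"
    and lmr: "\<And>n k. 1 \<le> n \<Longrightarrow> k < 2^(n-1) \<Longrightarrow> l n k < m n k \<and> m n k < r n k"
    and l10: "l 1 0 = 0" and r10: "r 1 0 = 1"
    and refine_l: "\<And>n k. 1 \<le> n \<Longrightarrow> k < 2^(n-1) \<Longrightarrow> l (n+1) (2*k) = l n k"
    and refine_m1: "\<And>n k. 1 \<le> n \<Longrightarrow> k < 2^(n-1) \<Longrightarrow> r (n+1) (2*k) = m n k"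
    and refine_m2: "\<And>n k. 1 \<le> n \<Longrightarrow> k < 2^(n-1) \<Longrightarrow> l (n+1) (2*k+1) = m n k"
    and refine_r: "\<And>n k. 1 \<le> n \<Longrightarrow> k < 2^(n-1) \<Longrightarrow> r (n+1) (2*k+1) = r n k"
    and shrink: "\<And>n k. 1 \<le> n \<Longrightarrow> k < 2^(n-1) \<Longrightarrow>
        max (r n k - m n k) (m n k - l n k) < rho * (r n k - l n k)"
    and prob: "prob_space M"
    and indep: "prob_space.indep_vars M (\<lambda>_. borel) (\<lambda>(p, c) \<omega>. Xi p \<omega> $ c) (Iset \<times> UNIV)"
    and gauss: "\<And>p c. p \<in> Iset \<Longrightarrow> distributed M lborel (\<lambda>\<omega>. Xi p \<omega> $ c) std_normal_density"
    and N: "1 \<le> N"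
  shows "(\<forall>a\<in>blk_idx N. \<forall>b\<in>blk_idx N.
            SigmaN M F Gam l m r Xi N a b = (\<Sum>e\<in>blk_idx N. PsiN F Gam l m r a e * PsiN F Gam l m r b e))
         \<and> is_cholesky (blk_idx N) idx_less (SigmaN M F Gam l m r Xi N) (PsiN F Gam l m r)"
proof -
  interpret allctx alpha F sqrtGam Gam l m r
    by unfold_locales (fact assms)+
  interpret P: prob_space M by (rule prob)
  define \<xi> :: "(nat \<times> nat) \<times> 'd \<Rightarrow> 'a \<Rightarrow> real" where "\<xi> = (\<lambda>(p, c) \<omega>. Xi p \<omega> $ c)"
  have D: "\<And>e. e \<in> Iset \<times> UNIV \<Longrightarrow> distributed M lborel (\<xi> e) std_normal_density"
    using gauss by (auto simp: \<xi>_def)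
  have fin: "finite (blk_idx N :: ((nat \<times> nat) \<times> 'd) set)"
    unfolding blk_idx_def using finite_IsetN by simp
  have sub: "(blk_idx N :: ((nat \<times> nat) \<times> 'd) set) \<subseteq> Iset \<times> UNIV"
    unfolding blk_idx_def using IsetN_sub by auto
  have X: "XN F Gam l m r Xi N (fst a) \<omega> $ snd a = (\<Sum>e\<in>blk_idx N. PsiN F Gam l m r a e * \<xi> e \<omega>)"
    for a :: "(nat \<times> nat) \<times> 'd" and \<omega>
  proof -
    have "XN F Gam l m r Xi N (fst a) \<omega> $ snd a =
        (\<Sum>nk\<in>IsetN N. \<Sum>c\<in>UNIV. psi F Gam l m r nk (midpt m (fst a)) $ snd a $ c * Xi nk \<omega> $ c)"
      by (simp add: XN_def sum_component matrix_vector_mult_def)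
    also have "\<dots> = (\<Sum>e\<in>IsetN N \<times> UNIV. PsiN F Gam l m r a e * \<xi> e \<omega>)"
      by (simp add: sum.cartesian_product PsiN_def \<xi>_def case_prod_beta)
    finally show ?thesis by (simp add: blk_idx_def)
  qed
  have cov: "SigmaN M F Gam l m r Xi N a b = (\<Sum>e\<in>blk_idx N. PsiN F Gam l m r a e * PsiN F Gam l m r b e)"
    for a b :: "(nat \<times> nat) \<times> 'd"
    unfolding SigmaN_def X
    by (rule P.cov_lin[OF indep[folded \<xi>_def] D fin sub])
  have zero: "PsiN F Gam l m r a b = 0"
    if a: "a \<in> blk_idx N" and b: "b \<in> blk_idx N" and lt: "idx_less a b" for a b :: "(nat \<times> nat) \<times> 'd"
  proof -
    have aI: "fst a \<in> Iset" and bI: "fst b \<in> Iset" using a b sub by auto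
    from lt consider "pos (fst a) < pos (fst b)" | "fst a = fst b" "snd a < snd b"
      unfolding idx_less_def by blast
    then show ?thesis
    proof cases
      case 1
      then show ?thesis using psi_zero[OF bI aI 1] by (simp add: PsiN_def)
    next
      case 2
      then show ?thesis using psi_diag[OF aI] sig_props[OF aI]
        by (simp add: PsiN_def lower_tri_def)
    qed
  qed
  have diag: "PsiN F Gam l m r a a > 0" if a: "a \<in> blk_idx N" for a :: "(nat \<times> nat) \<times> 'd"
  proof -
    have aI: "fst a \<in> Iset" using a sub by auto
    then show ?thesis using psi_diag[OF aI] sig_props[OF aI] by (simp add: PsiN_def)
  qed
  show ?thesis
    unfolding is_cholesky_def using cov zero diag by blast
qed



end
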